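(* For $q\in\{1,2\}$ and all $M\in\mathbb{R}^{n\times n}$, $$\|\mathcal{U}_b(M)\|_{b,2^q}\le2^{q-1}\|M\|_{b,2^q}.$$
   Context: Fix a block structure $0=n_0<n_1<\dots<n_m=n$; block $(i,j)$, $0\le i,j\le m-1$, consists of rows $n_i+1..n_{i+1}$ and columns $n_j+1..n_{j+1}$. The block upper triangular truncation $\mathcal{U}_b(M)$ has blocks $\mathcal{U}_b(M)(i,j)=M(i,j)$ for $i\le j$ and $0$ for $i>j$. $\mathcal{D}_b\subset\mathbb{R}^{n\times m}$ is the set of $X$ with $X_{ij}=0$ whenever $i\notin[n_{j-1}+1,n_j]$, and $\|A\|_{b,p}:=\sup\{\|AX\|_{S_p}:X\in\mathcal{D}_b,\ \|X\|_{S_\infty}\le1\}$ with $\|\cdot\|_{S_p}$ the Schatten $p$-norm. *)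

theory Defs
  imports "Jordan_Normal_Form.Char_Poly"
begin

text \<open>Singular values of a real matrix A (with multiplicity): square roots of the
eigenvalues of A^T A, i.e. of the roots of its characteristic polynomial
(A^T A is symmetric positive semidefinite, so this polynomial splits over the reals).\<close>
definition sing_vals :: "real mat \<Rightarrow> real multiset" where
  "sing_vals A = image_mset sqrt (proots (char_poly (transpose_mat A * A)))"

definition schatten :: "real \<Rightarrow> real mat \<Rightarrow> real" where
  "schatten p A = (\<Sum>s\<in>#sing_vals A. s powr p) powr (1 / p)"

definition schatten_inf :: "real mat \<Rightarrow> real" where
  "schatten_inf A = Max (insert 0 (set_mset (sing_vals A)))"

text \<open>Block structure 0 = ns 0 < ns 1 < ... < ns m = n. Indices are 0-based:
block i consists of the (0-based) indices ns i ..< ns (Suc i).\<close>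
definition block_structure :: "(nat \<Rightarrow> nat) \<Rightarrow> nat \<Rightarrow> nat \<Rightarrow> bool" where
  "block_structure ns m n \<longleftrightarrow> ns 0 = 0 \<and> ns m = n \<and> (\<forall>i<m. ns i < ns (Suc i))"

definition block_upper :: "(nat \<Rightarrow> nat) \<Rightarrow> nat \<Rightarrow> real mat \<Rightarrow> real mat" where
  "block_upper ns m M = mat (dim_row M) (dim_col M) (\<lambda>(r, c).
     if (\<exists>i j. i \<le> j \<and> j < m \<and> ns i \<le> r \<and> r < ns (Suc i) \<and> ns j \<le> c \<and> c < ns (Suc j))
     then M $$ (r, c) else 0)"

definition Db :: "(nat \<Rightarrow> nat) \<Rightarrow> nat \<Rightarrow> nat \<Rightarrow> real mat set" where
  "Db ns m n = {X \<in> carrier_mat n m. \<forall>r<n. \<forall>j<m. \<not> (ns j \<le> r \<and> r < ns (Suc j)) \<longrightarrow> X $$ (r, j) = 0}"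

definition bnorm :: "(nat \<Rightarrow> nat) \<Rightarrow> nat \<Rightarrow> nat \<Rightarrow> real \<Rightarrow> real mat \<Rightarrow> real" where
  "bnorm ns m n p A = Sup {schatten p (A * X) | X. X \<in> Db ns m n \<and> schatten_inf X \<le> 1}"

end

theory Submission
  imports Defs "Jordan_Normal_Form.Schur_Decomposition"
begin


lemma sum_rearr:
  fixes c d :: "'i \<Rightarrow> 'a::comm_semiring_1" and a :: "'k \<Rightarrow> 'i \<Rightarrow> 'a"
  shows "(\<Sum>i\<in>I. c i * (\<Sum>j\<in>I. (\<Sum>k\<in>K. a k i * a k j) * d j))
       = (\<Sum>k\<in>K. (\<Sum>i\<in>I. c i * a k i) * (\<Sum>j\<in>I. a k j * d j))"
proof -
  have "(\<Sum>i\<in>I. c i * (\<Sum>j\<in>I. (\<Sum>k\<in>K. a k i * a k j) * d j))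
     = (\<Sum>i\<in>I. \<Sum>j\<in>I. \<Sum>k\<in>K. c i * a k i * (a k j * d j))"
    by (simp add: sum_distrib_left sum_distrib_right mult_ac)
  also have "\<dots> = (\<Sum>i\<in>I. \<Sum>k\<in>K. \<Sum>j\<in>I. c i * a k i * (a k j * d j))"
    by (rule sum.cong[OF refl], rule sum.swap)
  also have "\<dots> = (\<Sum>k\<in>K. \<Sum>i\<in>I. \<Sum>j\<in>I. c i * a k i * (a k j * d j))"
    by (rule sum.swap)
  also have "\<dots> = (\<Sum>k\<in>K. (\<Sum>i\<in>I. c i * a k i) * (\<Sum>j\<in>I. a k j * d j))"
    by (simp add: sum_product)
  finally show ?thesis .
qed

lemma cnj_mult_self: "cnj z * z = complex_of_real ((cmod z)^2)"
  using complex_norm_square[of z] by (simp add: mult.commute)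

lemma eig_real_nonneg:
  fixes A :: "real mat"
  assumes A: "A \<in> carrier_mat k n"
    and ev: "eigenvector (map_mat complex_of_real (transpose_mat A * A)) v a"
  shows "a = complex_of_real (Re a) \<and> Re a \<ge> 0"
proof -
  let ?C = "map_mat complex_of_real (transpose_mat A * A)"
  have C: "?C \<in> carrier_mat n n" using A by auto
  from ev C have v: "v \<in> carrier_vec n" and v0: "v \<noteq> 0\<^sub>v n" and eq: "?C *\<^sub>v v = a \<cdot>\<^sub>v v"
    unfolding eigenvector_def by auto
  define w where "w k' = (\<Sum>j<n. complex_of_real (A $$ (k', j)) * v $ j)" for k'
  have Ci: "?C $$ (i, j) = complex_of_real (\<Sum>k'<k. A $$ (k', i) * A $$ (k', j))" if "i < n" "j < n" for i j
    using A that by (auto simp: scalar_prod_def lessThan_atLeast0)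
  have Cv: "(?C *\<^sub>v v) $ i = (\<Sum>j<n. complex_of_real (\<Sum>k'<k. A $$ (k', i) * A $$ (k', j)) * v $ j)" if "i < n" for i
    using A v that by (auto simp: scalar_prod_def lessThan_atLeast0 Ci intro!: sum.cong)
  define s where "s = (\<Sum>i<n. cnj (v $ i) * (?C *\<^sub>v v) $ i)"
  have s1: "s = a * (\<Sum>i<n. cnj (v $ i) * v $ i)"
    unfolding s_def eq using v by (auto simp: sum_distrib_left mult_ac intro!: sum.cong)
  have "s = (\<Sum>i<n. cnj (v $ i) * (\<Sum>j<n. (\<Sum>k'<k. complex_of_real (A $$ (k', i)) * complex_of_real (A $$ (k', j))) * v $ j))"
    unfolding s_def by (auto simp: Cv intro!: sum.cong)
  also have "\<dots> = (\<Sum>k'<k. (\<Sum>i<n. cnj (v $ i) * complex_of_real (A $$ (k', i))) * (\<Sum>j<n. complex_of_real (A $$ (k', j)) * v $ j))"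
    by (rule sum_rearr)
  also have "\<dots> = (\<Sum>k'<k. cnj (w k') * w k')"
    unfolding w_def by (auto simp: mult.commute)
  also have "\<dots> = complex_of_real (\<Sum>k'<k. (cmod (w k'))^2)"
    unfolding of_real_sum by (rule sum.cong, auto simp: cnj_mult_self)
  finally have s2: "s = complex_of_real (\<Sum>k'<k. (cmod (w k'))^2)" .
  have vv: "(\<Sum>i<n. cnj (v $ i) * v $ i) = complex_of_real (\<Sum>i<n. (cmod (v $ i))^2)"
    unfolding of_real_sum by (rule sum.cong, auto simp: cnj_mult_self)
  obtain i where i: "i < n" "v $ i \<noteq> 0" using v v0 by (metis eq_vecI index_zero_vec(1,2) carrier_vecD)
  have pos: "(\<Sum>i<n. (cmod (v $ i))^2) > 0"
  proof -
    have "(cmod (v $ i))^2 \<le> (\<Sum>i<n. (cmod (v $ i))^2)"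
      by (rule member_le_sum) (use i in auto)
    moreover have "(cmod (v $ i))^2 > 0" using i by auto
    ultimately show ?thesis by linarith
  qed
  define V where "V = (\<Sum>i<n. (cmod (v $ i))^2)"
  define W where "W = (\<Sum>k'<k. (cmod (w k'))^2)"
  have "a * complex_of_real V = complex_of_real W" using s1 s2 vv unfolding V_def W_def by simp
  moreover have Vp: "V > 0" using pos V_def by simp
  ultimately have "a = complex_of_real W / complex_of_real V"
    by (simp add: eq_divide_eq)
  hence a: "a = complex_of_real (W / V)" by simp
  have "W \<ge> 0" unfolding W_def by (auto intro: sum_nonneg)
  with Vp a show ?thesis by auto
qed


interpretation ofr_poly: map_poly_inj_idom_hom "of_real :: real \<Rightarrow> complex" ..

lemma map_prod_lin: "map_poly (of_real :: real \<Rightarrow> complex) (\<Prod>e\<leftarrow>es. [:-e,1:]) = (\<Prod>e\<leftarrow>es. [:-of_real e,1:])"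
  by (simp add: ofr_poly.hom_prod_list o_def)

lemma char_poly_AtA_split:
  fixes A :: "real mat"
  assumes A: "A \<in> carrier_mat k n"
  shows "\<exists>es. char_poly (transpose_mat A * A) = (\<Prod>e\<leftarrow>es. [:-e,1:]) \<and> (\<forall>e\<in>set es. e \<ge> 0)"
proof -
  let ?B = "transpose_mat A * A"
  have B: "?B \<in> carrier_mat n n" using A by auto
  let ?Bc = "map_mat complex_of_real ?B"
  have Bc: "?Bc \<in> carrier_mat n n" using B by auto
  obtain as where as: "char_poly ?Bc = (\<Prod>a\<leftarrow>as. [:- a, 1:])"
    using char_poly_factorized[OF Bc] by blast
  have re: "a = complex_of_real (Re a) \<and> Re a \<ge> 0" if a: "a \<in> set as" for a
  proof -
    have "poly (char_poly ?Bc) a = 0" unfolding as poly_prod_list prod_list_zero_iff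
      using a by auto
    hence "eigenvalue ?Bc a" using eigenvalue_root_char_poly[OF Bc] by simp
    then obtain v where "eigenvector ?Bc v a" unfolding eigenvalue_def by blast
    from eig_real_nonneg[OF A this] show ?thesis .
  qed
  define es where "es = map Re as"
  have "map_poly complex_of_real (char_poly ?B) = char_poly ?Bc"
    by (rule of_real_hom.char_poly_hom[OF B, symmetric])
  also have "\<dots> = (\<Prod>a\<leftarrow>as. [:- a, 1:])" by (rule as)
  also have "\<dots> = (\<Prod>e\<leftarrow>es. [:- complex_of_real e, 1:])"
    unfolding es_def map_map o_def
    by (rule arg_cong[where f = prod_list], rule map_cong[OF refl], use re in metis)
  also have "\<dots> = map_poly complex_of_real (\<Prod>e\<leftarrow>es. [:-e,1:])" by (rule map_prod_lin[symmetric])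
  finally have "char_poly ?B = (\<Prod>e\<leftarrow>es. [:-e,1:])" by simp
  moreover have "\<forall>e\<in>set es. e \<ge> 0" unfolding es_def using re by auto
  ultimately show ?thesis by blast
qed


definition tr :: "real mat \<Rightarrow> real" where "tr B = (\<Sum>i<dim_row B. B $$ (i,i))"

lemma tr_comm: assumes P: "P \<in> carrier_mat a b" and Q: "Q \<in> carrier_mat b a"
  shows "tr (P * Q) = tr (Q * P)"
proof -
  have "tr (P * Q) = (\<Sum>i<a. \<Sum>j<b. P $$ (i,j) * Q $$ (j,i))"
    unfolding tr_def using P Q by (auto simp: scalar_prod_def lessThan_atLeast0 intro!: sum.cong)
  also have "\<dots> = (\<Sum>j<b. \<Sum>i<a. Q $$ (j,i) * P $$ (i,j))"
    by (subst sum.swap) (simp add: mult.commute)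
  also have "\<dots> = tr (Q * P)"
    unfolding tr_def using P Q by (auto simp: scalar_prod_def lessThan_atLeast0 intro!: sum.cong)
  finally show ?thesis .
qed

lemma tr_sim: assumes "similar_mat_wit B T P Q" "B \<in> carrier_mat n n"
  shows "tr B = tr T" "tr (B * B) = tr (T * T)" "T \<in> carrier_mat n n"
proof -
  from assms have c: "T \<in> carrier_mat n n" "P \<in> carrier_mat n n" "Q \<in> carrier_mat n n"
    and PQ: "P * Q = 1\<^sub>m n" and QP: "Q * P = 1\<^sub>m n" and B: "B = P * T * Q"
    unfolding similar_mat_wit_def Let_def by auto
  show "T \<in> carrier_mat n n" by fact
  have "tr B = tr ((P * T) * Q)" using B by simp
  also have "\<dots> = tr (Q * (P * T))" by (rule tr_comm[of _ n n], use c in auto)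
  also have "Q * (P * T) = (Q * P) * T" using c by (simp add: assoc_mult_mat)
  also have "\<dots> = T" using QP c by simp
  finally show "tr B = tr T" .
  have R: "P * T \<in> carrier_mat n n" using c by auto
  have QR: "Q * (P * T) = T" using c QP by (simp add: assoc_mult_mat[symmetric, of Q n n P n T n])
  have "B * B = (P * T * Q) * (P * T * Q)" using B by simp
  also have "\<dots> = (P * T) * (Q * ((P * T) * Q))" using c R by (simp add: assoc_mult_mat[of _ n n _ n _ n])
  also have "Q * ((P * T) * Q) = (Q * (P * T)) * Q" using c R by (simp add: assoc_mult_mat[of _ n n _ n _ n])
  also have "\<dots> = T * Q" using QR by simp
  also have "(P * T) * (T * Q) = P * (T * (T * Q))" using c by (simp add: assoc_mult_mat[of _ n n _ n _ n])
  also have "T * (T * Q) = (T * T) * Q" using c by (simp add: assoc_mult_mat[of _ n n _ n _ n])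
  also have "P * ((T * T) * Q) = (P * (T * T)) * Q" using c by (simp add: assoc_mult_mat[of _ n n _ n _ n])
  finally have BB: "B * B = (P * (T * T)) * Q" .
  have "tr (B * B) = tr (Q * (P * (T * T)))" unfolding BB by (rule tr_comm[of _ n n], use c in auto)
  also have "Q * (P * (T * T)) = (Q * P) * (T * T)" by (rule assoc_mult_mat[symmetric], use c in auto)
  also have "\<dots> = T * T" using QP c by simp
  finally show "tr (B * B) = tr (T * T)" .
qed

lemma tr_ut: assumes T: "T \<in> carrier_mat n n" and ut: "upper_triangular T"
  shows "tr T = sum_list (diag_mat T)" "tr (T * T) = sum_list (map (\<lambda>e. e^2) (diag_mat T))"
proof -
  show "tr T = sum_list (diag_mat T)" unfolding tr_def diag_mat_def using T
    by (simp add: sum_list_sum_nth lessThan_atLeast0)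
  have d: "(T * T) $$ (i,i) = (T $$ (i,i))^2" if i: "i < n" for i
  proof -
    have "(T * T) $$ (i,i) = (\<Sum>k\<in>{0..<n}. T $$ (i,k) * T $$ (k,i))"
      using T i by (simp add: scalar_prod_def)
    also have "\<dots> = (\<Sum>k\<in>{i}. T $$ (i,k) * T $$ (k,i))"
    proof (rule sum.mono_neutral_right)
      show "\<forall>k\<in>{0..<n} - {i}. T $$ (i,k) * T $$ (k,i) = 0"
      proof
        fix k assume k: "k \<in> {0..<n} - {i}"
        show "T $$ (i,k) * T $$ (k,i) = 0"
        proof (cases "k < i")
          case True then show ?thesis using ut T i unfolding upper_triangular_def by auto
        next
          case False then have "i < k" using k by auto
          then show ?thesis using ut T k unfolding upper_triangular_def by auto
        qed
      qed
    qed (use i in auto)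
    finally show ?thesis by (simp add: power2_eq_square)
  qed
  have dT: "dim_row (T * T) = n" using T by simp
  have "tr (T * T) = (\<Sum>i<n. (T$$(i,i))^2)" unfolding tr_def dT
    by (auto intro!: sum.cong simp: d simp del: index_mult_mat)
  then show "tr (T * T) = sum_list (map (\<lambda>e. e^2) (diag_mat T))" unfolding diag_mat_def using T
    by (simp add: sum_list_sum_nth lessThan_atLeast0)
qed

lemma AtA_traces:
  fixes A :: "real mat"
  assumes A: "A \<in> carrier_mat k n"
  shows "\<exists>es. sing_vals A = mset (map sqrt es) \<and> (\<forall>e\<in>set es. e \<ge> 0)
     \<and> sum_list es = tr (transpose_mat A * A)
     \<and> sum_list (map (\<lambda>e. e^2) es) = tr ((transpose_mat A * A) * (transpose_mat A * A))"
proof -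
  let ?B = "transpose_mat A * A"
  have B: "?B \<in> carrier_mat n n" using A by auto
  obtain es where cp: "char_poly ?B = (\<Prod>e\<leftarrow>es. [:-e,1:])" and nn: "\<forall>e\<in>set es. e \<ge> 0"
    using char_poly_AtA_split[OF A] by blast
  obtain T P Q where sd: "schur_decomposition ?B es = (T,P,Q)" by (cases "schur_decomposition ?B es") auto
  from schur_decomposition[OF B cp sd] have sim: "similar_mat_wit ?B T P Q"
    and ut: "upper_triangular T" and dg: "diag_mat T = es" by auto
  note tt = tr_sim[OF sim B]
  have "proots (char_poly ?B) = mset es"
    unfolding cp
  proof (induct es)
    case (Cons a es)
    have nz: "(\<Prod>e\<leftarrow>es. [:-e,1:]) \<noteq> (0 :: real poly)" by (auto simp: prod_list_zero_iff)
    have nz2: "[:-a,1:] \<noteq> (0 :: real poly)" by simp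
    have l: "proots [:-a,1:] = {#a#}" using proots_linear_factor[of "-a"] by simp
    have "proots (\<Prod>e\<leftarrow>a#es. [:-e,1:]) = proots ([:-a,1:] * (\<Prod>e\<leftarrow>es. [:-e,1:]))"
      by simp
    also have "\<dots> = proots [:-a,1:] + proots (\<Prod>e\<leftarrow>es. [:-e,1:])"
      by (rule proots_mult[OF nz2 nz])
    finally show ?case using Cons l by simp
  qed simp
  hence sv: "sing_vals A = mset (map sqrt es)" unfolding sing_vals_def by simp
  show ?thesis
    using sv nn tt tr_ut[OF tt(3) ut] dg by auto
qed


lemma sum_sv_powr:
  assumes "\<forall>e\<in>set es. e \<ge> (0::real)"
  shows "(\<Sum>s\<in>#mset (map sqrt es). s powr 2) = sum_list es"
    "(\<Sum>s\<in>#mset (map sqrt es). s powr 4) = sum_list (map (\<lambda>e. e^2) es)"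
proof -
  have "(\<Sum>s\<in>#mset (map sqrt es). s powr 2) = sum_list (map (\<lambda>e. sqrt e powr 2) es)"
    by (induct es) auto
  also have "\<dots> = sum_list es"
    using assms by (induct es) (auto simp: powr_numeral)
  finally show "(\<Sum>s\<in>#mset (map sqrt es). s powr 2) = sum_list es" .
  have "(\<Sum>s\<in>#mset (map sqrt es). s powr 4) = sum_list (map (\<lambda>e. sqrt e powr 4) es)"
    by (induct es) auto
  also have "\<dots> = sum_list (map (\<lambda>e. e^2) es)"
  proof -
    have "sqrt e powr 4 = e^2" if "e \<ge> 0" for e :: real
    proof -
      have "sqrt e powr 4 = sqrt e ^ 4" using that by (simp add: powr_numeral)
      also have "\<dots> = (sqrt e ^ 2)^2" by simp
      also have "\<dots> = e^2" using that by simp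
      finally show ?thesis .
    qed
    then show ?thesis using assms by (induct es) auto
  qed
  finally show "(\<Sum>s\<in>#mset (map sqrt es). s powr 4) = sum_list (map (\<lambda>e. e^2) es)" .
qed

definition gram :: "real mat \<Rightarrow> nat \<Rightarrow> nat \<Rightarrow> real" where
  "gram A i j = (\<Sum>r<dim_row A. A $$ (r,i) * A $$ (r,j))"

lemma tr_AtA: assumes A: "A \<in> carrier_mat k n"
  shows "tr (transpose_mat A * A) = (\<Sum>i<n. \<Sum>r<k. (A $$ (r,i))^2)"
  unfolding tr_def using A
  by (auto simp: scalar_prod_def lessThan_atLeast0 power2_eq_square intro!: sum.cong)

lemma sq_idx: assumes "C \<in> carrier_mat n n" "i < n"
  shows "(C * C) $$ (i,i) = (\<Sum>j\<in>{0..<n}. C $$ (i,j) * C $$ (j,i))"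
  using assms by (simp add: scalar_prod_def)

lemma tr_AtA2: assumes A: "A \<in> carrier_mat k n"
  shows "tr ((transpose_mat A * A) * (transpose_mat A * A)) = (\<Sum>i<n. \<Sum>j<n. (gram A i j)^2)"
proof -
  have B: "(transpose_mat A * A) $$ (i,j) = gram A i j" if "i < n" "j < n" for i j
    using A that by (auto simp: gram_def scalar_prod_def lessThan_atLeast0 intro!: sum.cong)
  have g: "gram A j i = gram A i j" for i j unfolding gram_def by (simp add: mult.commute)
  have "tr ((transpose_mat A * A) * (transpose_mat A * A)) = (\<Sum>i<n. \<Sum>j<n. gram A i j * gram A j i)"
  proof -
    let ?B = "transpose_mat A * A"
    have cB: "?B \<in> carrier_mat n n" using A by auto
    have "(?B * ?B) $$ (i,i) = (\<Sum>j<n. gram A i j * gram A j i)" if i: "i < n" for i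
    proof -
      have "(?B * ?B) $$ (i,i) = (\<Sum>j\<in>{0..<n}. ?B $$ (i,j) * ?B $$ (j,i))"
        by (rule sq_idx[OF cB i])
      also have "\<dots> = (\<Sum>j<n. gram A i j * gram A j i)"
        using i by (auto simp: B lessThan_atLeast0 intro!: sum.cong simp del: index_mult_mat)
      finally show ?thesis .
    qed
    then show ?thesis unfolding tr_def using cB by auto
  qed
  also have "\<dots> = (\<Sum>i<n. \<Sum>j<n. (gram A i j)^2)" by (simp add: g power2_eq_square)
  finally show ?thesis .
qed

lemma schatten2: assumes A: "A \<in> carrier_mat k n"
  shows "schatten 2 A = (\<Sum>i<n. \<Sum>r<k. (A $$ (r,i))^2) powr (1/2)"
proof -
  obtain es where sv: "sing_vals A = mset (map sqrt es)" and nn: "\<forall>e\<in>set es. e \<ge> 0"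
    and t: "sum_list es = tr (transpose_mat A * A)"
    using AtA_traces[OF A] by blast
  show ?thesis unfolding schatten_def sv sum_sv_powr(1)[OF nn] t tr_AtA[OF A] by simp
qed

lemma schatten4: assumes A: "A \<in> carrier_mat k n"
  shows "schatten 4 A = (\<Sum>i<n. \<Sum>j<n. (gram A i j)^2) powr (1/4)"
proof -
  obtain es where sv: "sing_vals A = mset (map sqrt es)" and nn: "\<forall>e\<in>set es. e \<ge> 0"
    and t: "sum_list (map (\<lambda>e. e^2) es) = tr ((transpose_mat A * A) * (transpose_mat A * A))"
    using AtA_traces[OF A] by blast
  show ?thesis unfolding schatten_def sv sum_sv_powr(2)[OF nn] t tr_AtA2[OF A] by simp
qed


lemma sq_sum_expand:
  fixes u v :: "nat \<Rightarrow> nat \<Rightarrow> real"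
  shows "(\<Sum>i<m. \<Sum>k<m. (\<Sum>r<N. u r i * v r k)^2)
       = (\<Sum>a<N. \<Sum>b<N. (\<Sum>i<m. u a i * u b i) * (\<Sum>k<m. v a k * v b k))"
proof -
  have "(\<Sum>i<m. \<Sum>k<m. (\<Sum>r<N. u r i * v r k)^2)
     = (\<Sum>i<m. \<Sum>k<m. \<Sum>a<N. \<Sum>b<N. u a i * u b i * (v a k * v b k))"
    by (simp add: power2_eq_square sum_product mult_ac)
  also have "\<dots> = (\<Sum>i<m. \<Sum>a<N. \<Sum>k<m. \<Sum>b<N. u a i * u b i * (v a k * v b k))"
    by (rule sum.cong[OF refl], rule sum.swap)
  also have "\<dots> = (\<Sum>i<m. \<Sum>a<N. \<Sum>b<N. \<Sum>k<m. u a i * u b i * (v a k * v b k))"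
    by (rule sum.cong[OF refl], rule sum.cong[OF refl], rule sum.swap)
  also have "\<dots> = (\<Sum>a<N. \<Sum>i<m. \<Sum>b<N. \<Sum>k<m. u a i * u b i * (v a k * v b k))"
    by (rule sum.swap)
  also have "\<dots> = (\<Sum>a<N. \<Sum>b<N. \<Sum>i<m. \<Sum>k<m. u a i * u b i * (v a k * v b k))"
    by (rule sum.cong[OF refl], rule sum.swap)
  also have "\<dots> = (\<Sum>a<N. \<Sum>b<N. (\<Sum>i<m. u a i * u b i) * (\<Sum>k<m. v a k * v b k))"
    by (simp add: sum_product)
  finally show ?thesis .
qed

lemma core4:
  fixes s :: "nat \<Rightarrow> nat \<Rightarrow> real" and K :: "nat \<Rightarrow> nat \<Rightarrow> bool"
  assumes monoK: "\<And>r i k. K r i \<Longrightarrow> i \<le> k \<Longrightarrow> K r k"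
  defines "t \<equiv> \<lambda>r j. if K r j then s r j else 0"
  shows "(\<Sum>i<m. \<Sum>k<m. (\<Sum>r<N. t r i * t r k)^2) \<le> 4 * (\<Sum>i<m. \<Sum>k<m. (\<Sum>r<N. s r i * s r k)^2)"
proof -
  define H where "H i k = (\<Sum>r<N. t r i * s r k)" for i k
  define X where "X = (\<Sum>i<m. \<Sum>k<m. (\<Sum>r<N. t r i * t r k)^2)"
  define Y where "Y = (\<Sum>i<m. \<Sum>k<m. (\<Sum>r<N. s r i * s r k)^2)"
  define Z where "Z = (\<Sum>i<m. \<Sum>k<m. (H i k)^2)"
  have GH: "(\<Sum>r<N. t r i * t r k) = H i k" if "i \<le> k" for i k
    unfolding H_def t_def by (rule sum.cong) (use monoK that in auto)
  have sym: "(\<Sum>r<N. t r i * t r k) = (\<Sum>r<N. t r k * t r i)" for i k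
    by (simp add: mult.commute)
  have pt: "(\<Sum>r<N. t r i * t r k)^2 \<le> (H i k)^2 + (H k i)^2" for i k
  proof (cases "i \<le> k")
    case True then show ?thesis using GH by simp
  next
    case False then have "k \<le> i" by simp
    then show ?thesis using GH[of k i] sym[of i k] by simp
  qed
  have "X \<le> (\<Sum>i<m. \<Sum>k<m. (H i k)^2 + (H k i)^2)"
    unfolding X_def by (intro sum_mono pt)
  also have "\<dots> = Z + (\<Sum>i<m. \<Sum>k<m. (H k i)^2)" unfolding Z_def by (simp add: sum.distrib)
  also have "(\<Sum>i<m. \<Sum>k<m. (H k i)^2) = Z" unfolding Z_def by (rule sum.swap)
  finally have X2: "X \<le> 2 * Z" by simp
  define Pt where "Pt a b = (\<Sum>i<m. t a i * t b i)" for a b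
  define Ps where "Ps a b = (\<Sum>i<m. s a i * s b i)" for a b
  have Zeq: "Z = (\<Sum>a<N. \<Sum>b<N. Pt a b * Ps a b)" unfolding Z_def H_def Pt_def Ps_def
    by (rule sq_sum_expand)
  have Xeq: "X = (\<Sum>a<N. \<Sum>b<N. Pt a b * Pt a b)" unfolding X_def Pt_def
    by (rule sq_sum_expand)
  have Yeq: "Y = (\<Sum>a<N. \<Sum>b<N. Ps a b * Ps a b)" unfolding Y_def Ps_def
    by (rule sq_sum_expand)
  have amgm: "Pt a b * Ps a b \<le> Pt a b * Pt a b / 4 + Ps a b * Ps a b" for a b
  proof -
    have "0 \<le> (Pt a b / 2 - Ps a b)^2" by simp
    then show ?thesis by (simp add: power2_eq_square algebra_simps)
  qed
  have "Z \<le> (\<Sum>a<N. \<Sum>b<N. Pt a b * Pt a b / 4 + Ps a b * Ps a b)"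
    unfolding Zeq by (intro sum_mono amgm)
  also have "\<dots> = X / 4 + Y" unfolding Xeq Yeq by (simp add: sum.distrib sum_divide_distrib)
  finally have "Z \<le> X / 4 + Y" .
  with X2 have "X \<le> 4 * Y" by linarith
  then show ?thesis unfolding X_def Y_def .
qed

lemma core2:
  fixes s :: "nat \<Rightarrow> nat \<Rightarrow> real" and K :: "nat \<Rightarrow> nat \<Rightarrow> bool"
  defines "t \<equiv> \<lambda>r j. if K r j then s r j else 0"
  shows "(\<Sum>i<m. \<Sum>r<N. (t r i)^2) \<le> (\<Sum>i<m. \<Sum>r<N. (s r i)^2)"
  unfolding t_def by (intro sum_mono) auto


lemma proots_lin_prod: "proots (\<Prod>e\<leftarrow>es. [:-e,1:]) = mset (es :: real list)"
proof (induct es)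
  case (Cons a es)
  have nz: "(\<Prod>e\<leftarrow>es. [:-e,1:]) \<noteq> (0 :: real poly)" by (auto simp: prod_list_zero_iff)
  have nz2: "[:-a,1:] \<noteq> (0 :: real poly)" by simp
  have l: "proots [:-a,1:] = {#a#}" using proots_linear_factor[of "-a"] by simp
  have "proots (\<Prod>e\<leftarrow>a#es. [:-e,1:]) = proots ([:-a,1:] * (\<Prod>e\<leftarrow>es. [:-e,1:]))"
    by simp
  also have "\<dots> = proots [:-a,1:] + proots (\<Prod>e\<leftarrow>es. [:-e,1:])"
    by (rule proots_mult[OF nz2 nz])
  finally show ?case using Cons l by simp
qed simp

lemma ns_mono: assumes "block_structure ns m n" "i < j" "j \<le> m"
  shows "ns (Suc i) \<le> ns j"
  using assms(2,3)
proof (induct j)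
  case (Suc j)
  from assms(1) Suc.prems have lt: "ns j < ns (Suc j)" unfolding block_structure_def by auto
  show ?case
  proof (cases "i = j")
    case True then show ?thesis by simp
  next
    case False then have "i < j" using Suc.prems by simp
    with Suc lt show ?thesis by simp
  qed
qed simp

lemma blk_unique: assumes "block_structure ns m n" "i < m" "j < m"
  "ns i \<le> c" "c < ns (Suc i)" "ns j \<le> c" "c < ns (Suc j)"
  shows "i = j"
proof (rule ccontr)
  assume "i \<noteq> j"
  then consider "i < j" | "j < i" by linarith
  then show False
  proof cases
    case 1 then have "ns (Suc i) \<le> ns j" using ns_mono[OF assms(1)] assms by simp
    then show False using assms by simp
  next
    case 2 then have "ns (Suc j) \<le> ns i" using ns_mono[OF assms(1)] assms by simp
    then show False using assms by simp
  qed
qed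

lemma Db_zero: assumes "X \<in> Db ns m n" "r < n" "j < m" "\<not> (ns j \<le> r \<and> r < ns (Suc j))"
  shows "X $$ (r,j) = 0"
  using assms unfolding Db_def by auto

lemma sv_Db: assumes bs: "block_structure ns m n" and Y: "Y \<in> Db ns m n"
  shows "sing_vals Y = mset (map (\<lambda>j. sqrt (\<Sum>r<n. (Y $$ (r,j))^2)) [0..<m])"
proof -
  have cY: "Y \<in> carrier_mat n m" using Y unfolding Db_def by auto
  let ?B = "transpose_mat Y * Y"
  have B: "?B \<in> carrier_mat m m" using cY by auto
  have off: "?B $$ (i,j) = 0" if "i < m" "j < m" "i \<noteq> j" for i j
  proof -
    have "?B $$ (i,j) = (\<Sum>r\<in>{0..<n}. Y $$ (r,i) * Y $$ (r,j))"
      using cY that by (simp add: scalar_prod_def)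
    also have "\<dots> = 0"
    proof (rule sum.neutral, rule ballI)
      fix r assume r: "r \<in> {0..<n}"
      show "Y $$ (r,i) * Y $$ (r,j) = 0"
      proof (cases "ns i \<le> r \<and> r < ns (Suc i)")
        case True
        then have "\<not> (ns j \<le> r \<and> r < ns (Suc j))" using blk_unique[OF bs, of i j r] that by auto
        then show ?thesis using Db_zero[OF Y, of r j] r that by simp
      next
        case False then show ?thesis using Db_zero[OF Y, of r i] r that by simp
      qed
    qed
    finally show ?thesis .
  qed
  have ut: "upper_triangular ?B" unfolding upper_triangular_def using off B by auto
  have dg: "diag_mat ?B = map (\<lambda>j. (\<Sum>r<n. (Y $$ (r,j))^2)) [0..<m]"
    unfolding diag_mat_def using cY
    by (auto simp: scalar_prod_def power2_eq_square lessThan_atLeast0)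
  have "proots (char_poly ?B) = mset (diag_mat ?B)"
    unfolding char_poly_upper_triangular[OF B ut] by (rule proots_lin_prod)
  then show ?thesis unfolding sing_vals_def dg by (simp add: multiset.map_comp o_def)
qed

lemma Db_bound: assumes bs: "block_structure ns m n" and Y: "Y \<in> Db ns m n"
  and si: "schatten_inf Y \<le> 1" and c: "c < n" and j: "j < m"
  shows "\<bar>Y $$ (c,j)\<bar> \<le> 1"
proof -
  let ?d = "\<lambda>j. sqrt (\<Sum>r<n. (Y $$ (r,j))^2)"
  have "?d j \<in> set_mset (sing_vals Y)" unfolding sv_Db[OF bs Y] using j by auto
  moreover have "finite (insert 0 (set_mset (sing_vals Y)))" by simp
  ultimately have "?d j \<le> schatten_inf Y" unfolding schatten_inf_def by (intro Max_ge) auto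
  with si have "?d j \<le> 1" by linarith
  hence s1: "(\<Sum>r<n. (Y $$ (r,j))^2) \<le> 1" by simp
  have "(Y $$ (c,j))^2 \<le> (\<Sum>r<n. (Y $$ (r,j))^2)"
    by (rule member_le_sum) (use c in auto)
  with s1 have "(Y $$ (c,j))^2 \<le> 1" by simp
  then show ?thesis by (simp add: abs_square_le_1)
qed

lemma zero_in_Db: assumes bs: "block_structure ns m n"
  shows "0\<^sub>m n m \<in> Db ns m n" "schatten_inf (0\<^sub>m n m) \<le> 1"
proof -
  show z: "0\<^sub>m n m \<in> Db ns m n" unfolding Db_def by auto
  have "set_mset (sing_vals (0\<^sub>m n m)) \<subseteq> {0}" unfolding sv_Db[OF bs z] by auto
  hence e: "insert 0 (set_mset (sing_vals (0\<^sub>m n m))) = {0}" by auto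
  show "schatten_inf (0\<^sub>m n m) \<le> 1" unfolding schatten_inf_def e by simp
qed


definition Kb :: "(nat \<Rightarrow> nat) \<Rightarrow> nat \<Rightarrow> nat \<Rightarrow> bool" where
  "Kb ns r j \<longleftrightarrow> (\<exists>i\<le>j. ns i \<le> r \<and> r < ns (Suc i))"

lemma Kb_mono: "Kb ns r i \<Longrightarrow> i \<le> k \<Longrightarrow> Kb ns r k"
  unfolding Kb_def by (meson order.trans)

lemma UX_entry:
  assumes bs: "block_structure ns m n" and M: "M \<in> carrier_mat n n" and X: "X \<in> Db ns m n"
    and r: "r < n" and j: "j < m"
  shows "(block_upper ns m M * X) $$ (r,j) = (if Kb ns r j then (M * X) $$ (r,j) else 0)"
proof -
  have cX: "X \<in> carrier_mat n m" using X unfolding Db_def by auto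
  have cU: "block_upper ns m M \<in> carrier_mat n n" using M unfolding block_upper_def by auto
  have Uidx: "block_upper ns m M $$ (r,c) = (if (\<exists>i j. i \<le> j \<and> j < m \<and> ns i \<le> r \<and> r < ns (Suc i) \<and> ns j \<le> c \<and> c < ns (Suc j))
     then M $$ (r, c) else 0)" if "c < n" for c
    using M r that unfolding block_upper_def by auto
  have tm: "block_upper ns m M $$ (r,c) * X $$ (c,j) = (if Kb ns r j then M $$ (r,c) * X $$ (c,j) else 0)"
    if c: "c < n" for c
  proof (cases "ns j \<le> c \<and> c < ns (Suc j)")
    case False
    then show ?thesis using Db_zero[OF X c j] by simp
  next
    case True
    have "(\<exists>i j'. i \<le> j' \<and> j' < m \<and> ns i \<le> r \<and> r < ns (Suc i) \<and> ns j' \<le> c \<and> c < ns (Suc j')) = Kb ns r j"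
    proof
      assume "\<exists>i j'. i \<le> j' \<and> j' < m \<and> ns i \<le> r \<and> r < ns (Suc i) \<and> ns j' \<le> c \<and> c < ns (Suc j')"
      then obtain i j' where h: "i \<le> j'" "j' < m" "ns i \<le> r" "r < ns (Suc i)" "ns j' \<le> c" "c < ns (Suc j')" by blast
      have "j' = j" using blk_unique[OF bs h(2) j h(5,6)] True by simp
      then show "Kb ns r j" unfolding Kb_def using h by auto
    next
      assume "Kb ns r j"
      then show "\<exists>i j'. i \<le> j' \<and> j' < m \<and> ns i \<le> r \<and> r < ns (Suc i) \<and> ns j' \<le> c \<and> c < ns (Suc j')"
        unfolding Kb_def using True j by blast
    qed
    then show ?thesis using Uidx[OF c] by simp
  qed
  have "(block_upper ns m M * X) $$ (r,j) = (\<Sum>c\<in>{0..<n}. block_upper ns m M $$ (r,c) * X $$ (c,j))"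
    using cU cX r j by (simp add: scalar_prod_def)
  also have "\<dots> = (\<Sum>c\<in>{0..<n}. if Kb ns r j then M $$ (r,c) * X $$ (c,j) else 0)"
    by (rule sum.cong) (auto simp: tm)
  also have "\<dots> = (if Kb ns r j then (M * X) $$ (r,j) else 0)"
    using M cX r j by (simp add: scalar_prod_def)
  finally show ?thesis .
qed

lemma pw4:
  assumes bs: "block_structure ns m n" and M: "M \<in> carrier_mat n n" and X: "X \<in> Db ns m n"
  shows "schatten 4 (block_upper ns m M * X) \<le> 2 * schatten 4 (M * X)"
proof -
  have cX: "X \<in> carrier_mat n m" using X unfolding Db_def by auto
  have cU: "block_upper ns m M \<in> carrier_mat n n" using M unfolding block_upper_def by auto
  define s where "s r i = (M * X) $$ (r,i)" for r i
  define t where "t = (\<lambda>r j. if Kb ns r j then s r j else 0)"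
  have cUX: "block_upper ns m M * X \<in> carrier_mat n m" using cU cX by auto
  have cMX: "M * X \<in> carrier_mat n m" using M cX by auto
  have gU: "gram (block_upper ns m M * X) i j = (\<Sum>r<n. t r i * t r j)" if "i < m" "j < m" for i j
    unfolding gram_def using cUX that by (auto intro!: sum.cong simp: UX_entry[OF bs M X] t_def s_def)
  have gM: "gram (M * X) i j = (\<Sum>r<n. s r i * s r j)" for i j
    unfolding gram_def s_def using M by simp
  define Xv where "Xv = (\<Sum>i<m. \<Sum>k<m. (\<Sum>r<n. t r i * t r k)^2)"
  define Yv where "Yv = (\<Sum>i<m. \<Sum>k<m. (\<Sum>r<n. s r i * s r k)^2)"
  have e1: "schatten 4 (block_upper ns m M * X) = Xv powr (1/4)"
    unfolding schatten4[OF cUX] Xv_def by (auto intro!: arg_cong[where f = "\<lambda>x. x powr (1/4)"] sum.cong simp: gU)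
  have e2: "schatten 4 (M * X) = Yv powr (1/4)"
    unfolding schatten4[OF cMX] Yv_def gM ..
  have le: "Xv \<le> 4 * Yv" unfolding Xv_def Yv_def t_def
    by (rule core4) (rule Kb_mono)
  have Y0: "Yv \<ge> 0" unfolding Yv_def by (auto intro!: sum_nonneg)
  have X0: "Xv \<ge> 0" unfolding Xv_def by (auto intro!: sum_nonneg)
  have "Xv powr (1/4) \<le> (16 * Yv) powr (1/4)"
    by (rule powr_mono2) (use le Y0 X0 in auto)
  also have "\<dots> = 16 powr (1/4) * Yv powr (1/4)" using Y0 by (simp add: powr_mult)
  also have "(16::real) powr (1/4) = 2"
  proof -
    have "(16::real) = 2 powr 4" by (simp add: powr_numeral)
    then have "(16::real) powr (1/4) = 2 powr (4 * (1/4))" by (simp add: powr_powr)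
    then show ?thesis by simp
  qed
  finally show ?thesis unfolding e1 e2 .
qed

lemma pw2:
  assumes bs: "block_structure ns m n" and M: "M \<in> carrier_mat n n" and X: "X \<in> Db ns m n"
  shows "schatten 2 (block_upper ns m M * X) \<le> schatten 2 (M * X)"
proof -
  have cX: "X \<in> carrier_mat n m" using X unfolding Db_def by auto
  have cU: "block_upper ns m M \<in> carrier_mat n n" using M unfolding block_upper_def by auto
  define s where "s r i = (M * X) $$ (r,i)" for r i
  define t where "t = (\<lambda>r j. if Kb ns r j then s r j else 0)"
  have cUX: "block_upper ns m M * X \<in> carrier_mat n m" using cU cX by auto
  have cMX: "M * X \<in> carrier_mat n m" using M cX by auto
  have e1: "schatten 2 (block_upper ns m M * X) = (\<Sum>i<m. \<Sum>r<n. (t r i)^2) powr (1/2)"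
    unfolding schatten2[OF cUX]
    by (auto intro!: arg_cong[where f = "\<lambda>x. x powr (1/2)"] sum.cong simp: UX_entry[OF bs M X] t_def s_def)
  have e2: "schatten 2 (M * X) = (\<Sum>i<m. \<Sum>r<n. (s r i)^2) powr (1/2)"
    unfolding schatten2[OF cMX] s_def ..
  show ?thesis unfolding e1 e2 t_def
    by (rule powr_mono2) (auto intro!: sum_nonneg core2)
qed


lemma MY_bound:
  assumes bs: "block_structure ns m n" and M: "M \<in> carrier_mat n n" and Y: "Y \<in> Db ns m n"
    and si: "schatten_inf Y \<le> 1" and r: "r < n" and j: "j < m"
  shows "\<bar>(M * Y) $$ (r,j)\<bar> \<le> (\<Sum>r'<n. \<Sum>c<n. \<bar>M $$ (r',c)\<bar>)"
proof -
  have cY: "Y \<in> carrier_mat n m" using Y unfolding Db_def by auto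
  have "(M * Y) $$ (r,j) = (\<Sum>c<n. M $$ (r,c) * Y $$ (c,j))"
    using M cY r j by (simp add: scalar_prod_def lessThan_atLeast0)
  hence "\<bar>(M * Y) $$ (r,j)\<bar> \<le> (\<Sum>c<n. \<bar>M $$ (r,c) * Y $$ (c,j)\<bar>)"
    by (simp add: sum_abs)
  also have "\<dots> \<le> (\<Sum>c<n. \<bar>M $$ (r,c)\<bar>)"
  proof (rule sum_mono)
    fix c assume "c \<in> {..<n}"
    then have "\<bar>Y $$ (c,j)\<bar> \<le> 1" using Db_bound[OF bs Y si _ j] by simp
    then show "\<bar>M $$ (r,c) * Y $$ (c,j)\<bar> \<le> \<bar>M $$ (r,c)\<bar>"
      by (simp add: abs_mult mult_left_le)
  qed
  also have "\<dots> \<le> (\<Sum>r'<n. \<Sum>c<n. \<bar>M $$ (r',c)\<bar>)"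
    by (rule member_le_sum[where f = "\<lambda>r'. \<Sum>c<n. \<bar>M $$ (r',c)\<bar>"]) (use r in \<open>auto intro: sum_nonneg\<close>)
  finally show ?thesis .
qed

lemma bdd2:
  assumes bs: "block_structure ns m n" and M: "M \<in> carrier_mat n n"
  shows "bdd_above {schatten 2 (M * X) | X. X \<in> Db ns m n \<and> schatten_inf X \<le> 1}"
proof -
  define Mb where "Mb = (\<Sum>r'<n. \<Sum>c<n. \<bar>M $$ (r',c)\<bar>)"
  have Mb0: "Mb \<ge> 0" unfolding Mb_def by (auto intro: sum_nonneg)
  show ?thesis
  proof (rule bdd_aboveI[where M = "(\<Sum>i<m. \<Sum>r<n. Mb^2) powr (1/2)"])
    fix x assume "x \<in> {schatten 2 (M * X) | X. X \<in> Db ns m n \<and> schatten_inf X \<le> 1}"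
    then obtain Y where Y: "Y \<in> Db ns m n" "schatten_inf Y \<le> 1" and x: "x = schatten 2 (M * Y)" by blast
    have cY: "Y \<in> carrier_mat n m" using Y unfolding Db_def by auto
    have cMY: "M * Y \<in> carrier_mat n m" using M cY by auto
    have b: "((M * Y) $$ (r,i))^2 \<le> Mb^2" if "r < n" "i < m" for r i
      using MY_bound[OF bs M Y that] Mb0 unfolding Mb_def[symmetric]
      by (simp add: abs_le_square_iff[symmetric])
    have "(\<Sum>i<m. \<Sum>r<n. ((M * Y) $$ (r,i))^2) \<le> (\<Sum>i<m. \<Sum>r<n. Mb^2)"
      by (intro sum_mono) (use b in auto)
    hence "x \<le> (\<Sum>i<m. \<Sum>r<n. Mb^2) powr (1/2)"
      unfolding x schatten2[OF cMY]
      by (intro powr_mono2) (auto intro!: sum_nonneg)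
    then show "x \<le> (\<Sum>i<m. \<Sum>r<n. Mb^2) powr (1/2)" .
  qed
qed

lemma bdd4:
  assumes bs: "block_structure ns m n" and M: "M \<in> carrier_mat n n"
  shows "bdd_above {schatten 4 (M * X) | X. X \<in> Db ns m n \<and> schatten_inf X \<le> 1}"
proof -
  define Mb where "Mb = (\<Sum>r'<n. \<Sum>c<n. \<bar>M $$ (r',c)\<bar>)"
  have Mb0: "Mb \<ge> 0" unfolding Mb_def by (auto intro: sum_nonneg)
  show ?thesis
  proof (rule bdd_aboveI[where M = "(\<Sum>i<m. \<Sum>j<m. (real n * (Mb * Mb))^2) powr (1/4)"])
    fix x assume "x \<in> {schatten 4 (M * X) | X. X \<in> Db ns m n \<and> schatten_inf X \<le> 1}"
    then obtain Y where Y: "Y \<in> Db ns m n" "schatten_inf Y \<le> 1" and x: "x = schatten 4 (M * Y)" by blast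
    have cY: "Y \<in> carrier_mat n m" using Y unfolding Db_def by auto
    have cMY: "M * Y \<in> carrier_mat n m" using M cY by auto
    have b: "\<bar>(M * Y) $$ (r,i)\<bar> \<le> Mb" if "r < n" "i < m" for r i
      using MY_bound[OF bs M Y that] unfolding Mb_def .
    have g: "(gram (M * Y) i j)^2 \<le> (real n * (Mb * Mb))^2" if "i < m" "j < m" for i j
    proof -
      have "\<bar>gram (M * Y) i j\<bar> \<le> (\<Sum>r<n. \<bar>(M * Y) $$ (r,i) * (M * Y) $$ (r,j)\<bar>)"
        unfolding gram_def using M by (simp add: sum_abs)
      also have "\<dots> \<le> (\<Sum>r<n. Mb * Mb)"
        by (intro sum_mono) (use Mb0 in \<open>auto simp: abs_mult intro!: mult_mono b that\<close>)
      also have "\<dots> = real n * (Mb * Mb)" by simp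
      finally have "\<bar>gram (M * Y) i j\<bar> \<le> \<bar>real n * (Mb * Mb)\<bar>" using Mb0 by simp
      then show ?thesis unfolding abs_le_square_iff .
    qed
    have "(\<Sum>i<m. \<Sum>j<m. (gram (M * Y) i j)^2) \<le> (\<Sum>i<m. \<Sum>j<m. (real n * (Mb * Mb))^2)"
      by (intro sum_mono) (use g in auto)
    hence "x \<le> (\<Sum>i<m. \<Sum>j<m. (real n * (Mb * Mb))^2) powr (1/4)"
      unfolding x schatten4[OF cMY]
      by (intro powr_mono2) (auto intro!: sum_nonneg)
    then show "x \<le> (\<Sum>i<m. \<Sum>j<m. (real n * (Mb * Mb))^2) powr (1/4)" .
  qed
qed

lemma bnorm_le:
  assumes bs: "block_structure ns m n" and c: "c \<ge> 0"
    and pw: "\<And>X. X \<in> Db ns m n \<Longrightarrow> schatten p (U * X) \<le> c * schatten p (M * X)"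
    and bdd: "bdd_above {schatten p (M * X) | X. X \<in> Db ns m n \<and> schatten_inf X \<le> 1}"
  shows "bnorm ns m n p U \<le> c * bnorm ns m n p M"
  unfolding bnorm_def
proof (rule cSup_least)
  show "{schatten p (U * X) |X. X \<in> Db ns m n \<and> schatten_inf X \<le> 1} \<noteq> {}"
    using zero_in_Db[OF bs] by blast
next
  fix x assume "x \<in> {schatten p (U * X) |X. X \<in> Db ns m n \<and> schatten_inf X \<le> 1}"
  then obtain X where X: "X \<in> Db ns m n" "schatten_inf X \<le> 1" and x: "x = schatten p (U * X)" by blast
  have "schatten p (M * X) \<le> Sup {schatten p (M * X) | X. X \<in> Db ns m n \<and> schatten_inf X \<le> 1}"
    by (rule cSup_upper) (use X bdd in auto)
  with pw[OF X(1)] c show "x \<le> c * Sup {schatten p (M * X) | X. X \<in> Db ns m n \<and> schatten_inf X \<le> 1}"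
    unfolding x by (meson mult_left_mono order_trans)
qed

theorem mainTheorem10:
  fixes ns :: "nat \<Rightarrow> nat" and m n q :: nat and M :: "real mat"
  assumes "block_structure ns m n"
    and "q \<in> {1, 2}"
    and "M \<in> carrier_mat n n"
  shows "bnorm ns m n (2 ^ q) (block_upper ns m M) \<le> 2 ^ (q - 1) * bnorm ns m n (2 ^ q) M"
proof -
  from assms(2) consider "q = 1" | "q = 2" by auto
  then show ?thesis
  proof cases
    case 1
    have "bnorm ns m n 2 (block_upper ns m M) \<le> 1 * bnorm ns m n 2 M"
      by (rule bnorm_le[OF assms(1)]) (use pw2[OF assms(1,3)] bdd2[OF assms(1,3)] in auto)
    then show ?thesis using 1 by simp
  next
    case 2
    have "bnorm ns m n 4 (block_upper ns m M) \<le> 2 * bnorm ns m n 4 M"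
      by (rule bnorm_le[OF assms(1)]) (use pw4[OF assms(1,3)] bdd4[OF assms(1,3)] in auto)
    then show ?thesis using 2 by simp
  qed
qed
end
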